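(* Let $\mu\ge 0$ be an integer and let $\mathcal{F}$ be a $(2\mu+1)$-uniform weak $\Delta$-system. (i) If the intersection size of $\mathcal{F}$ is $\mu+1$ and $|\mathcal{F}|\ge \mu^2+\mu+3$, then $\mathcal{F}$ is a strong $\Delta$-system. (ii) If the intersection size of $\mathcal{F}$ is $\mu$ and $|\mathcal{F}|\ge(\mu+1)^2+\mu+3$, then $\mathcal{F}$ is a strong $\Delta$-system.
   Context: A family $\mathcal{F}=\{S_1,\dots,S_m\}$ of (distinct) finite sets is $h$-uniform if $|S|=h$ for every $S\in\mathcal{F}$. It is a weak $\Delta$-system if there is an integer $\lambda$ (its intersection size) with $|S_i\cap S_j|=\lambda$ for all distinct $S_i,S_j\in\mathcal{F}$. It is a strong $\Delta$-system (sunflower) if there is a set $C$ (the core) with $S_i\cap S_j=C$ for all distinct $S_i,S_j\in\mathcal{F}$. *)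

theory Defs
  imports Main
begin

definition uniform_family :: "nat \<Rightarrow> 'a set set \<Rightarrow> bool" where
  "uniform_family h F \<longleftrightarrow> (\<forall>S\<in>F. finite S \<and> card S = h)"

definition weak_delta_system :: "nat \<Rightarrow> 'a set set \<Rightarrow> bool" where
  "weak_delta_system lam F \<longleftrightarrow>
     (\<forall>S\<in>F. \<forall>T\<in>F. S \<noteq> T \<longrightarrow> card (S \<inter> T) = lam)"

definition strong_delta_system :: "'a set set \<Rightarrow> bool" where
  "strong_delta_system F \<longleftrightarrow>
     (\<exists>C. \<forall>S\<in>F. \<forall>T\<in>F. S \<noteq> T \<longrightarrow> S \<inter> T = C)"

end

theory Submission imports Defs begin

lemma dc:
  assumes "finite I" "finite X"
  shows "(\<Sum>i\<in>I. card (S i \<inter> X)) = (\<Sum>y\<in>X. card {i\<in>I. y \<in> S i})"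
proof -
  have "(\<Sum>i\<in>I. card (S i \<inter> X)) = (\<Sum>i\<in>I. \<Sum>y\<in>X. if y \<in> S i then 1 else 0)"
  proof (rule sum.cong[OF refl])
    fix i assume "i \<in> I"
    have "card (S i \<inter> X) = card (X \<inter> S i)" by (simp add: Int_commute)
    also have "\<dots> = (\<Sum>y\<in>X \<inter> S i. 1)" by simp
    also have "\<dots> = (\<Sum>y\<in>X. if y \<in> S i then 1 else 0)"
      by (rule sum.inter_restrict[OF assms(2)])
    finally show "card (S i \<inter> X) = (\<Sum>y\<in>X. if y \<in> S i then 1 else 0)" .
  qed
  also have "\<dots> = (\<Sum>y\<in>X. \<Sum>i\<in>I. if y \<in> S i then 1 else 0)" by (rule sum.swap)
  also have "\<dots> = (\<Sum>y\<in>X. card {i\<in>I. y \<in> S i})"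
  proof (rule sum.cong[OF refl])
    fix y
    have "card {i\<in>I. y \<in> S i} = (\<Sum>i\<in>{i\<in>I. y \<in> S i}. 1)" by simp
    also have "\<dots> = (\<Sum>i\<in>I. if y \<in> S i then 1 else 0)"
      by (rule sum.inter_filter[OF assms(1)])
    finally show "(\<Sum>i\<in>I. if y \<in> S i then 1 else 0) = card {i\<in>I. y \<in> S i}" by simp
  qed
  finally show ?thesis .
qed

lemma dc2:
  assumes "finite I" "finite J" "finite X" "\<And>i. i \<in> I \<Longrightarrow> S i \<subseteq> X"
  shows "(\<Sum>y\<in>X. card {i\<in>I. y \<in> S i} * card {j\<in>J. y \<in> T j})
       = (\<Sum>i\<in>I. \<Sum>j\<in>J. card (T j \<inter> S i))"
proof -
  have "(\<Sum>y\<in>X. card {i\<in>I. y \<in> S i} * card {j\<in>J. y \<in> T j})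
      = (\<Sum>y\<in>X. \<Sum>i\<in>I. if y \<in> S i then card {j\<in>J. y \<in> T j} else 0)"
  proof (rule sum.cong[OF refl])
    fix y
    have "card {i\<in>I. y \<in> S i} = (\<Sum>i\<in>{i\<in>I. y \<in> S i}. 1)" by simp
    also have "\<dots> = (\<Sum>i\<in>I. if y \<in> S i then 1 else 0)"
      by (rule sum.inter_filter[OF assms(1)])
    finally have "card {i\<in>I. y \<in> S i} = (\<Sum>i\<in>I. if y \<in> S i then 1 else 0)" .
    then have "card {i\<in>I. y \<in> S i} * card {j\<in>J. y \<in> T j} =
        (\<Sum>i\<in>I. (if y \<in> S i then 1 else 0) * card {j\<in>J. y \<in> T j})"
      by (simp add: sum_distrib_right)
    also have "\<dots> = (\<Sum>i\<in>I. if y \<in> S i then card {j\<in>J. y \<in> T j} else 0)"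
      by (rule sum.cong) auto
    finally show "card {i\<in>I. y \<in> S i} * card {j\<in>J. y \<in> T j} =
        (\<Sum>i\<in>I. if y \<in> S i then card {j\<in>J. y \<in> T j} else 0)" .
  qed
  also have "\<dots> = (\<Sum>i\<in>I. \<Sum>y\<in>X. if y \<in> S i then card {j\<in>J. y \<in> T j} else 0)"
    by (rule sum.swap)
  also have "\<dots> = (\<Sum>i\<in>I. \<Sum>y\<in>S i. card {j\<in>J. y \<in> T j})"
  proof (rule sum.cong[OF refl])
    fix i assume i: "i \<in> I"
    have "(\<Sum>y\<in>X. if y \<in> S i then card {j\<in>J. y \<in> T j} else 0)
        = (\<Sum>y\<in>X \<inter> S i. card {j\<in>J. y \<in> T j})"
      using assms(3) by (simp add: sum.inter_restrict)
    also have "X \<inter> S i = S i" using assms(4)[OF i] by blast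
    finally show "(\<Sum>y\<in>X. if y \<in> S i then card {j\<in>J. y \<in> T j} else 0)
        = (\<Sum>y\<in>S i. card {j\<in>J. y \<in> T j})" .
  qed
  also have "\<dots> = (\<Sum>i\<in>I. \<Sum>j\<in>J. card (T j \<inter> S i))"
  proof (rule sum.cong[OF refl])
    fix i assume i: "i \<in> I"
    have "finite (S i)" using finite_subset[OF assms(4)[OF i] assms(3)] .
    then show "(\<Sum>y\<in>S i. card {j\<in>J. y \<in> T j}) = (\<Sum>j\<in>J. card (T j \<inter> S i))"
      using dc[OF assms(2), of "S i" T] by simp
  qed
  finally show ?thesis .
qed


lemma obtain_min_int:
  fixes f :: "'b \<Rightarrow> int"
  assumes "finite A" "A \<noteq> {}"
  shows "\<exists>x\<in>A. \<forall>y\<in>A. f x \<le> f y"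
proof -
  have "Min (f ` A) \<in> f ` A" using assms by simp
  then obtain x where "x \<in> A" "f x = Min (f ` A)" by force
  moreover have "\<forall>y\<in>A. Min (f ` A) \<le> f y" using assms by simp
  ultimately show ?thesis by metis
qed

context
  fixes F :: "'a set set" and k lam :: nat
  assumes finF: "finite F"
    and unif: "\<And>S. S \<in> F \<Longrightarrow> finite S \<and> card S = k"
    and wd: "\<And>S T. S \<in> F \<Longrightarrow> T \<in> F \<Longrightarrow> S \<noteq> T \<Longrightarrow> card (S \<inter> T) = lam"
begin

lemma pairsum_same:
  assumes "P \<subseteq> F"
  shows "(\<Sum>B\<in>P. \<Sum>C\<in>P. card (C \<inter> B)) = card P * (k + (card P - 1) * lam)"
proof -
  have fP: "finite P" using assms finF finite_subset by blast
  have "(\<Sum>C\<in>P. card (C \<inter> B)) = k + (card P - 1) * lam" if B: "B \<in> P" for B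
  proof -
    have "(\<Sum>C\<in>P. card (C \<inter> B)) = card (B \<inter> B) + (\<Sum>C\<in>P - {B}. card (C \<inter> B))"
      using sum.remove[OF fP B, of "\<lambda>C. card (C \<inter> B)"] by simp
    also have "(\<Sum>C\<in>P - {B}. card (C \<inter> B)) = (\<Sum>C\<in>P - {B}. lam)"
      by (rule sum.cong[OF refl]) (use assms B wd in blast)
    also have "card (B \<inter> B) = k" using unif assms B by auto
    finally show ?thesis using fP B by (simp add: card_Diff_singleton)
  qed
  then show ?thesis by simp
qed

lemma pairsum_disj:
  assumes "P \<subseteq> F" "Q \<subseteq> F" "P \<inter> Q = {}"
  shows "(\<Sum>B\<in>P. \<Sum>C\<in>Q. card (C \<inter> B)) = card P * card Q * lam"
proof -
  have "(\<Sum>C\<in>Q. card (C \<inter> B)) = card Q * lam" if B: "B \<in> P" for B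
  proof -
    have "(\<Sum>C\<in>Q. card (C \<inter> B)) = (\<Sum>C\<in>Q. lam)"
      by (rule sum.cong[OF refl]) (use assms B wd in blast)
    then show ?thesis by simp
  qed
  then show ?thesis by simp
qed

lemma quad:
  assumes x: "x \<in> \<Union>F" and a0: "0 < card {B\<in>F. x \<in> B}"
    and am: "card {B\<in>F. x \<in> B} < card F"
  shows "card {B\<in>F. x \<in> B} * (card F - card {B\<in>F. x \<in> B}) < (k - lam) * card F"
proof -
  define F1 where "F1 = {B\<in>F. x \<in> B}"
  define F2 where "F2 = {B\<in>F. x \<notin> B}"
  define a where "a = card F1"
  define b where "b = card F2"
  define U where "U = \<Union>F"
  define m where "m = card F"
  have fU: "finite U" unfolding U_def using finF unif by blast
  have F1F: "F1 \<subseteq> F" and F2F: "F2 \<subseteq> F" and F12: "F1 \<inter> F2 = {}" unfolding F1_def F2_def by auto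
  have fF1: "finite F1" and fF2: "finite F2" using F1F F2F finF finite_subset by blast+
  have "F = F1 \<union> F2" unfolding F1_def F2_def by auto
  then have mab: "m = a + b" unfolding m_def a_def b_def using card_Un_disjoint[OF fF1 fF2 F12] by simp
  have a1: "a \<ge> 1" using a0 unfolding a_def F1_def by simp
  have b1: "b \<ge> 1" using am mab unfolding a_def F1_def m_def by simp
  have lk: "lam \<le> k"
  proof -
    have "F1 \<noteq> {}" "F2 \<noteq> {}" using a1 b1 unfolding a_def b_def by auto
    then obtain B C where "B \<in> F1" "C \<in> F2" by blast
    then have "B \<noteq> C" "B \<in> F" "C \<in> F" using F12 F1F F2F by auto
    then have "card (B \<inter> C) = lam" using wd by blast
    moreover have "card (B \<inter> C) \<le> card B" using unif[OF \<open>B \<in> F\<close>] by (metis card_mono inf_le1)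
    ultimately show ?thesis using unif \<open>B \<in> F\<close> by auto
  qed
  define \<alpha> where "\<alpha> y = card {B\<in>F1. y \<in> B}" for y
  define \<beta> where "\<beta> y = card {B\<in>F2. y \<in> B}" for y
  have subU: "\<And>B. B \<in> F \<Longrightarrow> B \<subseteq> U" unfolding U_def by blast
  have S11: "(\<Sum>y\<in>U. \<alpha> y * \<alpha> y) = a * (k + (a - 1) * lam)"
    unfolding \<alpha>_def a_def
    using dc2[OF fF1 fF1 fU, of "\<lambda>B. B" "\<lambda>B. B"] subU F1F pairsum_same[OF F1F] by auto
  have S22: "(\<Sum>y\<in>U. \<beta> y * \<beta> y) = b * (k + (b - 1) * lam)"
    unfolding \<beta>_def b_def
    using dc2[OF fF2 fF2 fU, of "\<lambda>B. B" "\<lambda>B. B"] subU F2F pairsum_same[OF F2F] by auto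
  have S12: "(\<Sum>y\<in>U. \<alpha> y * \<beta> y) = a * b * lam"
    unfolding \<alpha>_def \<beta>_def a_def b_def
    using dc2[OF fF1 fF2 fU, of "\<lambda>B. B" "\<lambda>B. B"] subU F1F pairsum_disj[OF F1F F2F F12] by auto
  have S1: "(\<Sum>y\<in>U. \<alpha> y) = a * k"
  proof -
    have "(\<Sum>y\<in>U. \<alpha> y) = (\<Sum>B\<in>F1. card (B \<inter> U))"
      unfolding \<alpha>_def using dc[OF fF1 fU, of "\<lambda>B. B"] by simp
    also have "\<dots> = (\<Sum>B\<in>F1. k)"
      by (rule sum.cong[OF refl]) (use subU unif F1F in \<open>auto simp: Int_absorb2\<close>)
    finally show ?thesis unfolding a_def by simp
  qed
  have S2: "(\<Sum>y\<in>U. \<beta> y) = b * k"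
  proof -
    have "(\<Sum>y\<in>U. \<beta> y) = (\<Sum>B\<in>F2. card (B \<inter> U))"
      unfolding \<beta>_def using dc[OF fF2 fU, of "\<lambda>B. B"] by simp
    also have "\<dots> = (\<Sum>B\<in>F2. k)"
      by (rule sum.cong[OF refl]) (use subU unif F2F in \<open>auto simp: Int_absorb2\<close>)
    finally show ?thesis unfolding b_def by simp
  qed
  define f where "f y = int b * int (\<alpha> y) - int a * int (\<beta> y)" for y
  have sq: "(\<Sum>y\<in>U. (f y)^2) = int b ^ 2 * int (\<Sum>y\<in>U. \<alpha> y * \<alpha> y)
        - 2 * int a * int b * int (\<Sum>y\<in>U. \<alpha> y * \<beta> y) + int a ^ 2 * int (\<Sum>y\<in>U. \<beta> y * \<beta> y)"
    unfolding f_def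
    by (simp add: power2_eq_square algebra_simps sum.distrib sum_subtractf sum_distrib_left of_nat_sum)
  have sqv: "(\<Sum>y\<in>U. (f y)^2) = int a * int b * int (k - lam) * int m"
  proof -
    have I11: "int (\<Sum>y\<in>U. \<alpha> y * \<alpha> y) = int a * (int k + (int a - 1) * int lam)"
      using S11 a1 by (simp add: of_nat_diff)
    have I22: "int (\<Sum>y\<in>U. \<beta> y * \<beta> y) = int b * (int k + (int b - 1) * int lam)"
      using S22 b1 by (simp add: of_nat_diff)
    have I12: "int (\<Sum>y\<in>U. \<alpha> y * \<beta> y) = int a * int b * int lam"
      using S12 by simp
    have "int (k - lam) = int k - int lam" using lk by simp
    moreover have "int m = int a + int b" using mab by simp
    ultimately show ?thesis unfolding sq I11 I22 I12
      by (simp add: algebra_simps power2_eq_square)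
  qed
  have sf: "(\<Sum>y\<in>U. f y) = 0"
  proof -
    have "(\<Sum>y\<in>U. f y) = int b * int (\<Sum>y\<in>U. \<alpha> y) - int a * int (\<Sum>y\<in>U. \<beta> y)"
      unfolding f_def by (simp add: sum_subtractf sum_distrib_left of_nat_sum)
    then show ?thesis unfolding S1 S2 by simp
  qed
  have xU: "x \<in> U" using x unfolding U_def .
  have ax: "\<alpha> x = a" unfolding \<alpha>_def a_def F1_def by (metis (no_types, lifting) mem_Collect_eq)
  have bx: "\<beta> x = 0" unfolding \<beta>_def F2_def by simp
  have fx: "f x = int a * int b" unfolding f_def ax bx by simp
  have "(\<Sum>y\<in>U. f y) = f x + (\<Sum>y\<in>U - {x}. f y)" using sum.remove[OF fU xU] .
  then have "(\<Sum>y\<in>U - {x}. f y) = - (int a * int b)" using sf fx by simp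
  moreover have "int a * int b \<noteq> 0" using a1 b1 by simp
  ultimately have "(\<Sum>y\<in>U - {x}. f y) \<noteq> 0" by simp
  then obtain y where y: "y \<in> U - {x}" "f y \<noteq> 0" by (meson sum.neutral)
  have "1 \<le> (f y)^2" using y(2) by (simp add: power2_eq_square) (smt (verit) mult_le_cancel_left1 mult_minus_left mult_minus_right)
  also have "(f y)^2 \<le> (\<Sum>y\<in>U - {x}. (f y)^2)"
    by (rule member_le_sum) (use y fU in auto)
  finally have g1: "1 \<le> (\<Sum>y\<in>U - {x}. (f y)^2)" .
  have "(\<Sum>y\<in>U. (f y)^2) = (f x)^2 + (\<Sum>y\<in>U - {x}. (f y)^2)" using sum.remove[OF fU xU] .
  then have ineq: "(int a * int b)^2 + 1 \<le> int a * int b * int (k - lam) * int m"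
    using g1 sqv fx by simp
  have "int a * int b < int (k - lam) * int m"
  proof (rule ccontr)
    assume "\<not> ?thesis"
    then have "int (k - lam) * int m \<le> int a * int b" by simp
    then have "int a * int b * (int (k - lam) * int m) \<le> int a * int b * (int a * int b)"
      by (rule mult_left_mono) simp
    then show False using ineq by (simp add: power2_eq_square algebra_simps)
  qed
  then have "a * b < (k - lam) * m" by (metis of_nat_less_iff of_nat_mult)
  moreover have "b = card F - a" using mab m_def by simp
  ultimately show ?thesis unfolding a_def F1_def m_def by simp
qed


lemma dich:
  fixes t m c :: nat
  assumes "(t+2)^2 \<le> 2*m" "c \<le> m" "c*(m-c) < t*m \<or> c = 0 \<or> c = m"
  shows "c \<le> t+1 \<or> m - c \<le> t+1"
proof (rule ccontr)
  assume "\<not> ?thesis"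
  then have c: "c \<ge> t+2" "m - c \<ge> t+2" by auto
  define d where "d = m - c"
  have md: "m = c + d" using assms(2) d_def by simp
  have P: "0 \<le> (int c - int t - 2) * (int d - int t - 2)"
    using c d_def by simp
  have "int ((t+2)^2) \<le> int (2*m)" using assms(1) by linarith
  then have Q: "(int t + 2)^2 \<le> 2 * (int c + int d)" using md by (simp add: add.commute)
  have P': "(int c - int t - 2) * (int d - int t - 2) = int c * int d - (int t + 2) * (int c + int d) + (int t + 2)^2"
    by (simp add: algebra_simps power2_eq_square)
  have R: "(int t + 2) * (int c + int d) = int t * (int c + int d) + 2 * (int c + int d)"
    by (simp add: algebra_simps)
  have "int t * (int c + int d) \<le> int c * int d"
    using P P' Q R by linarith
  then have "int (t * (c + d)) \<le> int (c * d)" by (simp add: algebra_simps)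
  then have "t * (c + d) \<le> c * d" by linarith
  then have "t * m \<le> c * (m - c)" unfolding d_def using assms(2) by simp
  moreover have "c \<noteq> 0" "c \<noteq> m" using c by auto
  ultimately show False using assms(3) by simp
qed

lemma symd:
  assumes "finite X" "finite Y"
  shows "card X + card Y = card ((X - Y) \<union> (Y - X)) + 2 * card (X \<inter> Y)"
proof -
  have "card X = card (X - Y) + card (X \<inter> Y)"
    using assms card_Diff_subset_Int[of X Y] card_mono[of X "X \<inter> Y"] by simp
  moreover have "card Y = card (Y - X) + card (X \<inter> Y)"
    using assms card_Diff_subset_Int[of Y X] card_mono[of Y "X \<inter> Y"] by (simp add: inf_commute)
  moreover have "card ((X - Y) \<union> (Y - X)) = card (X - Y) + card (Y - X)"
    using assms by (intro card_Un_disjoint) auto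
  ultimately show ?thesis by simp
qed


lemma core:
  assumes lk: "lam \<le> k"
    and h1: "(k - lam + 2)^2 \<le> 2 * card F"
    and h2: "(k - lam)^2 + 3 * (k - lam) + 4 < 2 * card F"
    and h3: "(k - lam)^2 + (k - lam) + 2 \<le> card F"
    and h4: "lam + 2 < card F"
    and h5: "(k - lam)^2 + (k - lam) + 3 \<le> card F \<or> k + 1 = 2 * (k - lam)"
  shows "strong_delta_system F"
proof -
  define t where "t = k - lam"
  define m where "m = card F"
  define U where "U = \<Union>F"
  define cnt where "cnt y = card {B\<in>F. y \<in> B}" for y
  define H where "H = {y\<in>U. t + 1 < cnt y}"
  define N where "N B = (B - H) \<union> (H - B)" for B
  define cnt' where "cnt' y = card {B\<in>F. y \<in> N B}" for y
  have fU: "finite U" unfolding U_def using finF unif by blast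
  have fH: "finite H" unfolding H_def using fU by simp
  have fN: "finite (N B)" if "B \<in> F" for B unfolding N_def using unif[OF that] fH by simp
  have cntm: "cnt y \<le> m" for y unfolding cnt_def m_def using finF by (simp add: card_mono)
  have hi: "m - cnt y \<le> t + 1" if "y \<in> H" for y
  proof -
    have yU: "y \<in> U" and c: "t + 1 < cnt y" using that unfolding H_def by auto
    have "cnt y * (m - cnt y) < t * m \<or> cnt y = 0 \<or> cnt y = m"
    proof (cases "cnt y = 0 \<or> cnt y = m")
      case False
      then have "0 < cnt y" "cnt y < m" using cntm[of y] by auto
      then show ?thesis using quad[of y] yU unfolding cnt_def m_def t_def U_def by simp
    qed auto
    then have "cnt y \<le> t+1 \<or> m - cnt y \<le> t+1"
      using dich[of t m "cnt y"] h1 cntm[of y] unfolding t_def m_def by simp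
    then show ?thesis using c by simp
  qed
  have low: "cnt' y \<le> t + 1" for y
  proof (cases "y \<in> H")
    case True
    then have "{B\<in>F. y \<in> N B} = F - {B\<in>F. y \<in> B}" unfolding N_def by auto
    then have "cnt' y = m - cnt y" unfolding cnt'_def cnt_def m_def using finF
      by (simp add: card_Diff_subset)
    then show ?thesis using hi[OF True] by simp
  next
    case False
    then have eq: "{B\<in>F. y \<in> N B} = {B\<in>F. y \<in> B}" unfolding N_def by auto
    show ?thesis
    proof (cases "y \<in> U")
      case True
      then show ?thesis using False eq unfolding cnt'_def H_def cnt_def by auto
    next
      case False
      then have X: "{B\<in>F. y \<in> B} = {}" unfolding U_def by blast
      show ?thesis unfolding cnt'_def eq X by simp
    qed
  qed
  define e where "e B = int (card (N B)) - int t" for B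
  define E where "E = (\<Sum>C\<in>F. e C)"
  have NN: "(N B - N C) \<union> (N C - N B) = (B - C) \<union> (C - B)" for B C unfolding N_def by blast
  have pair: "2 * int (card (N B \<inter> N C)) = e B + e C"
    if "B \<in> F" "C \<in> F" "B \<noteq> C" for B C
  proof -
    have "card (N B) + card (N C) = card ((B - C) \<union> (C - B)) + 2 * card (N B \<inter> N C)"
      using symd[OF fN[OF that(1)] fN[OF that(2)]] NN by simp
    moreover have "card B + card C = card ((B - C) \<union> (C - B)) + 2 * card (B \<inter> C)"
      using symd unif that by blast
    moreover have "card B = k" "card C = k" "card (B \<inter> C) = lam" using unif wd that by auto
    ultimately have "int (card (N B)) + int (card (N C)) = 2 * int t + 2 * int (card (N B \<inter> N C))"
      unfolding t_def using lk by linarith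
    then show ?thesis unfolding e_def by linarith
  qed
  have pnn: "0 \<le> e B + e C" if "B \<in> F" "C \<in> F" "B \<noteq> C" for B C
    using pair[OF that] by linarith
  have star: "(int m - 2 - 2 * int t) * e B + E \<le> 2 * int t ^ 2" if B: "B \<in> F" for B
  proof -
    have "(\<Sum>C\<in>F. card (N C \<inter> N B)) = (\<Sum>y\<in>N B. cnt' y)"
      unfolding cnt'_def using dc[OF finF fN[OF B], of N] by simp
    also have "\<dots> \<le> (\<Sum>y\<in>N B. t + 1)" by (rule sum_mono) (rule low)
    finally have s1: "(\<Sum>C\<in>F. card (N C \<inter> N B)) \<le> (t + 1) * card (N B)" by (simp add: mult.commute)
    have "(\<Sum>C\<in>F. card (N C \<inter> N B)) = card (N B \<inter> N B) + (\<Sum>C\<in>F - {B}. card (N C \<inter> N B))"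
      using sum.remove[OF finF B, of "\<lambda>C. card (N C \<inter> N B)"] by simp
    with s1 have s2: "(\<Sum>C\<in>F - {B}. card (N C \<inter> N B)) \<le> t * card (N B)" by simp
    have A1: "(\<Sum>C\<in>F - {B}. 2 * int (card (N C \<inter> N B))) = (\<Sum>C\<in>F - {B}. e B + e C)"
      by (rule sum.cong[OF refl]) (use pair B in \<open>auto simp: Int_commute\<close>)
    have A2: "(\<Sum>C\<in>F - {B}. e B + e C) = int (card (F - {B})) * e B + (\<Sum>C\<in>F - {B}. e C)"
      by (simp add: sum.distrib)
    have A3: "(\<Sum>C\<in>F - {B}. e C) = E - e B"
      unfolding E_def using sum.remove[OF finF B, of e] by simp
    have "0 < card F" using finF B card_gt_0_iff by blast
    moreover have "card (F - {B}) = card F - 1" using finF B by (simp add: card_Diff_singleton)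
    ultimately have A4: "int (card (F - {B})) = int m - 1" unfolding m_def by simp
    have A: "(\<Sum>C\<in>F - {B}. 2 * int (card (N C \<inter> N B))) = (int m - 1) * e B + (E - e B)"
      using A1 A2 A3 A4 by simp
    have Bq: "(\<Sum>C\<in>F - {B}. 2 * int (card (N C \<inter> N B))) = 2 * int (\<Sum>C\<in>F - {B}. card (N C \<inter> N B))"
      by (simp add: sum_distrib_left)
    have C: "int (\<Sum>C\<in>F - {B}. card (N C \<inter> N B)) \<le> int t * int (card (N B))"
      using s2 by (metis of_nat_le_iff of_nat_mult)
    have D: "int (card (N B)) = e B + int t" unfolding e_def by simp
    have C': "int (\<Sum>C\<in>F - {B}. card (N C \<inter> N B)) \<le> int t * (e B + int t)"
      using C unfolding D .
    have G: "(int m - 1) * e B + (E - e B) \<le> 2 * (int t * (e B + int t))"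
      using A Bq C' by linarith
    have X1: "2 * (int t * (e B + int t)) = 2 * int t * e B + 2 * int t ^ 2"
      by (simp add: algebra_simps power2_eq_square)
    have X2: "(int m - 2 - 2 * int t) * e B = (int m - 1) * e B - e B - 2 * int t * e B"
      by (simp add: algebra_simps)
    show ?thesis using G X1 X2 by linarith
  qed

  have m3: "m \<ge> 3" using h4 unfolding m_def by simp
  have tsq: "t \<le> t^2" by (simp add: power2_eq_square)
  have h3i: "int t ^ 2 + int t + 2 \<le> int m"
  proof -
    have "t^2 + t + 2 \<le> m" using h3 unfolding t_def m_def by simp
    then have "int (t^2 + t + 2) \<le> int m" by linarith
    then show ?thesis by simp
  qed
  have h2i: "int t ^ 2 + 3 * int t + 4 < 2 * int m"
  proof -
    have "t^2 + 3 * t + 4 < 2 * m" using h2 unfolding t_def m_def by simp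
    then have "int (t^2 + 3 * t + 4) < int (2 * m)" by linarith
    then show ?thesis by simp
  qed
  have h4i: "int lam + 2 < int m" using h4 unfolding m_def by simp
  have tsqi: "int t \<le> int t ^ 2" using tsq by (metis of_nat_le_iff of_nat_power)
  have mt: "0 \<le> int m - 2 - 2 * int t" using h3i tsqi by linarith
  have Fne: "F \<noteq> {}" using m3 unfolding m_def by auto
  have NB: "(N B - H) \<union> (H - N B) = B" for B unfolding N_def by blast
  have sizes: "int (card (N B)) + int (card H) = int k + 2 * int (card (N B \<inter> H))" if "B \<in> F" for B
  proof -
    have "card (N B) + card H = card ((N B - H) \<union> (H - N B)) + 2 * card (N B \<inter> H)"
      using symd[OF fN[OF that] fH] .
    then have "card (N B) + card H = k + 2 * card (N B \<inter> H)" unfolding NB using unif[OF that] by simp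
    then show ?thesis by linarith
  qed
  have disj0: "N B \<inter> N C = {}" if "B \<in> F" "C \<in> F" "B \<noteq> C" "e B + e C = 0" for B C
  proof -
    have "card (N B \<inter> N C) = 0" using pair[OF that(1-3)] that(4) by simp
    then show ?thesis using fN[OF that(1)] by simp
  qed
  have allzero: "strong_delta_system F" if az: "\<forall>C\<in>F. e C = 0"
  proof -
    have disj: "N B \<inter> N C = {}" if "B \<in> F" "C \<in> F" "B \<noteq> C" for B C
      using disj0[OF that] az that by simp
    define a where "a B = card (N B \<inter> H)" for B
    have inter: "B \<inter> C = H - N B - N C" if "B \<in> F" "C \<in> F" "B \<noteq> C" for B C
      using disj[OF that] unfolding N_def by blast
    have asum: "int (a B) + int (a C) = int (card H) - int lam" if "B \<in> F" "C \<in> F" "B \<noteq> C" for B C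
    proof -
      have "H - N B - N C = H - ((N B \<inter> H) \<union> (N C \<inter> H))" by blast
      moreover have "card (H - ((N B \<inter> H) \<union> (N C \<inter> H))) = card H - card ((N B \<inter> H) \<union> (N C \<inter> H))"
        using fH by (intro card_Diff_subset) auto
      moreover have "card ((N B \<inter> H) \<union> (N C \<inter> H)) = a B + a C"
        unfolding a_def using fH disj[OF that] by (intro card_Un_disjoint) auto
      moreover have "card ((N B \<inter> H) \<union> (N C \<inter> H)) \<le> card H" using fH by (intro card_mono) auto
      moreover have "card (B \<inter> C) = lam" using wd that by blast
      ultimately show ?thesis using inter[OF that] by simp
    qed
    obtain B0 where B0: "B0 \<in> F" using Fne by blast
    have aeq: "a B = a B0" if B: "B \<in> F" for B
    proof (cases "B = B0")
      case False
      have "card (F - {B, B0}) = m - 2" unfolding m_def using finF B B0 False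
        by (subst card_Diff_subset) auto
      then have "card (F - {B, B0}) \<noteq> 0" using m3 by simp
      then have "F - {B, B0} \<noteq> {}" by (metis card.empty)
      then obtain D where D: "D \<in> F" "D \<noteq> B" "D \<noteq> B0" by blast
      have "int (a B) + int (a D) = int (a B0) + int (a D)"
        using asum[OF B D(1)] asum[OF B0 D(1)] D by auto
      then show ?thesis by simp
    qed simp
    show ?thesis
    proof (cases "a B0 = 0")
      case True
      have "N B \<inter> H = {}" if "B \<in> F" for B
        using aeq[OF that] True fH unfolding a_def by simp
      then have "\<forall>S\<in>F. \<forall>T\<in>F. S \<noteq> T \<longrightarrow> S \<inter> T = H"
      proof (intro ballI impI)
        fix S T assume ST: "S \<in> F" "T \<in> F" "S \<noteq> T"
        assume h0: "\<And>B. B \<in> F \<Longrightarrow> N B \<inter> H = {}"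
        have "S \<inter> T = H - N S - N T" using inter[OF ST] .
        also have "\<dots> = H" using h0[OF ST(1)] h0[OF ST(2)] by blast
        finally show "S \<inter> T = H" .
      qed
      then show ?thesis unfolding strong_delta_system_def by blast
    next
      case False
      have "(\<Sum>B\<in>F. a B) = card (\<Union>B\<in>F. N B \<inter> H)"
        unfolding a_def
      proof (rule card_UN_disjoint[symmetric])
        show "finite F" by (rule finF)
        show "\<forall>i\<in>F. finite (N i \<inter> H)" using fH by simp
        show "\<forall>i\<in>F. \<forall>j\<in>F. i \<noteq> j \<longrightarrow> N i \<inter> H \<inter> (N j \<inter> H) = {}"
          using disj by blast
      qed
      also have "\<dots> \<le> card H" using fH by (intro card_mono) auto
      finally have "m * a B0 \<le> card H" using aeq unfolding m_def by simp
      moreover obtain B1 where B1: "B1 \<in> F" "B1 \<noteq> B0"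
      proof -
        have "card (F - {B0}) = m - 1" unfolding m_def using finF B0 by (simp add: card_Diff_singleton)
        then have "card (F - {B0}) \<noteq> 0" using m3 by simp
        then have "F - {B0} \<noteq> {}" by (metis card.empty)
        then show ?thesis using that by blast
      qed
      ultimately have "int m * int (a B0) \<le> int lam + 2 * int (a B0)"
      proof -
        assume "m * a B0 \<le> card H"
        then have "int m * int (a B0) \<le> int (card H)" by (metis of_nat_le_iff of_nat_mult)
        moreover have "int (a B0) + int (a B1) = int (card H) - int lam"
          using asum[OF B0 B1(1) B1(2)[symmetric]] .
        ultimately show ?thesis using aeq[OF B1(1)] by linarith
      qed
      moreover have "1 \<le> int (a B0)" using False by simp
      ultimately have "(int m - 2) * int (a B0) \<le> int lam" by (simp add: algebra_simps)
      moreover have "(int m - 2) * 1 \<le> (int m - 2) * int (a B0)"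
        using \<open>1 \<le> int (a B0)\<close> m3 by (intro mult_left_mono) auto
      ultimately have "(int m - 2) * 1 \<le> int lam" by (rule order_trans[rotated])
      then have False using h4i by simp
      then show ?thesis ..
    qed
  qed
  obtain B0 where B0: "B0 \<in> F" and B0min: "\<And>C. C \<in> F \<Longrightarrow> e B0 \<le> e C"
    using obtain_min_int[OF finF Fne, of e] by blast
  have esum: "E = e B0 + (\<Sum>C\<in>F - {B0}. e C)"
    unfolding E_def using sum.remove[OF finF B0, of e] .
  have cardF0: "card (F - {B0}) = m - 1" unfolding m_def using finF B0 by (simp add: card_Diff_singleton)
  have F0ne: "F - {B0} \<noteq> {}"
  proof -
    have "card (F - {B0}) \<noteq> 0" using cardF0 m3 by simp
    then show ?thesis by (metis card.empty)
  qed
  have fF0: "finite (F - {B0})" using finF by simp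
  consider (pos) "e B0 \<ge> 1" | (neg) "e B0 < 0" | (zero) "e B0 = 0" by linarith
  then show ?thesis
  proof cases
    case pos
    have "(\<Sum>C\<in>F. (1::int)) \<le> E" unfolding E_def
      by (rule sum_mono) (use B0min pos in force)
    then have Em: "int m \<le> E" unfolding m_def by simp
    have "(int m - 2 - 2 * int t) * 1 \<le> (int m - 2 - 2 * int t) * e B0"
      using mt pos by (intro mult_left_mono) auto
    then have "(int m - 2 - 2 * int t) \<le> (int m - 2 - 2 * int t) * e B0" by simp
    then have False using star[OF B0] Em h3i by (simp add: power2_eq_square) 
    then show ?thesis ..
  next
    case neg
    obtain B1 where B1: "B1 \<in> F - {B0}" and B1min: "\<And>C. C \<in> F - {B0} \<Longrightarrow> e B1 \<le> e C"
      using obtain_min_int[OF fF0 F0ne, of e] by blast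
    have B1F: "B1 \<in> F" and B10: "B1 \<noteq> B0" using B1 by auto
    have e01: "0 \<le> e B0 + e B1" using pnn[OF B0 B1F B10[symmetric]] .
    have e1: "1 \<le> e B1" using e01 neg by linarith
    have "(\<Sum>C\<in>F - {B0}. e B1) \<le> (\<Sum>C\<in>F - {B0}. e C)"
      by (rule sum_mono) (rule B1min)
    then have S0: "(int m - 1) * e B1 \<le> (\<Sum>C\<in>F - {B0}. e C)"
      using cardF0 m3 by (simp add: of_nat_diff)
    have st: "(int m - 2 - 2 * int t) * e B1 + E \<le> 2 * int t ^ 2" using star[OF B1F] .
    have X: "(int m - 2 - 2 * int t) * e B1 + (int m - 1) * e B1 = (2 * int m - 4 - 2 * int t) * e B1 + e B1"
      by (simp add: algebra_simps)
    have K: "(2 * int m - 4 - 2 * int t) * e B1 \<le> 2 * int t ^ 2"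
      using st esum S0 X e01 by linarith
    have "(2 * int m - 4 - 2 * int t) * 1 \<le> (2 * int m - 4 - 2 * int t) * e B1"
      using mt e1 by (intro mult_left_mono) auto
    then have "(2 * int m - 4 - 2 * int t) \<le> (2 * int m - 4 - 2 * int t) * e B1" by simp
    with K have mle: "int m \<le> int t ^ 2 + int t + 2" by linarith
    have tight: "k + 1 = 2 * t" and meq: "int m = int t ^ 2 + int t + 2"
    proof -
      have "\<not> (t^2 + t + 3 \<le> m)"
      proof
        assume "t^2 + t + 3 \<le> m"
        then have "int (t^2 + t + 3) \<le> int m" by linarith
        then show False using mle by simp
      qed
      then show "k + 1 = 2 * t" using h5 unfolding t_def m_def by simp
      show "int m = int t ^ 2 + int t + 2" using mle h3i by linarith
    qed
    have t1: "1 \<le> int t" using tight by simp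
    have "2 * int m - 4 - 2 * int t = 2 * int t ^ 2" using meq by simp
    then have K2: "2 * int t ^ 2 * e B1 \<le> 2 * int t ^ 2 * 1" using K by simp
    have tpos: "0 < 2 * int t ^ 2" using t1 by simp
    have "e B1 \<le> 1" using mult_le_cancel_left_pos[OF tpos, of "e B1" 1] K2 by blast
    then have e1eq: "e B1 = 1" using e1 by simp
    have e0eq: "e B0 = -1" using e01 e1eq neg by linarith
    have Ele: "E \<le> int t ^ 2 + int t" using st e1eq meq by (simp add: power2_eq_square algebra_simps)
    have "(\<Sum>C\<in>F - {B0}. e C - 1) = (\<Sum>C\<in>F - {B0}. e C) - int (card (F - {B0}))"
      by (simp add: sum_subtractf)
    also have "\<dots> \<le> 0" using Ele esum e0eq cardF0 meq m3 by (simp add: of_nat_diff)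
    finally have sle: "(\<Sum>C\<in>F - {B0}. e C - 1) \<le> 0" .
    have nn: "\<forall>C\<in>F - {B0}. 0 \<le> e C - 1" using B1min e1eq by fastforce
    have "0 \<le> (\<Sum>C\<in>F - {B0}. e C - 1)" using nn by (intro sum_nonneg) auto
    then have "(\<Sum>C\<in>F - {B0}. e C - 1) = 0" using sle by linarith
    then have "\<forall>C\<in>F - {B0}. e C - 1 = 0" using sum_nonneg_eq_0_iff[OF fF0, of "\<lambda>C. e C - 1"] nn by blast
    then have all1: "\<forall>C\<in>F - {B0}. e C = 1" by simp
    have dj: "N C \<inter> N B0 = {}" if "C \<in> F - {B0}" for C
      using disj0[of C B0] that all1 e0eq B0 by auto
    define c where "c C = card (N C \<inter> H)" for C
    have szC: "int (card (N C)) = int t + 1" if "C \<in> F - {B0}" for C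
    proof -
      have "e C = 1" using all1 that by blast
      then show ?thesis unfolding e_def by linarith
    qed
    have sz0: "int (card (N B0)) = int t - 1" using e0eq unfolding e_def by auto
    have kt: "int k = 2 * int t - 1" using tight by linarith
    have Hc: "int (card H) = int t + 2 * int (c B0)" using sizes[OF B0] sz0 kt unfolding c_def by linarith
    have cC: "int (c C) = int (c B0) + 1" if "C \<in> F - {B0}" for C
      using sizes[of C] that szC[OF that] Hc kt unfolding c_def by auto
    have "(\<Sum>C\<in>F - {B0}. card (N C \<inter> H)) = (\<Sum>y\<in>H. card {C\<in>F - {B0}. y \<in> N C})"
      using dc[OF fF0 fH, of N] .
    also have "\<dots> \<le> (\<Sum>y\<in>H. if y \<in> N B0 then 0 else t + 1)"
    proof (rule sum_mono)
      fix y assume "y \<in> H"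
      show "card {C\<in>F - {B0}. y \<in> N C} \<le> (if y \<in> N B0 then 0 else t + 1)"
      proof (cases "y \<in> N B0")
        case True
        then have X: "{C\<in>F - {B0}. y \<in> N C} = {}" using dj by blast
        show ?thesis unfolding X using True by simp
      next
        case False
        have "card {C\<in>F - {B0}. y \<in> N C} \<le> cnt' y" unfolding cnt'_def
          using finF by (intro card_mono) auto
        then show ?thesis using low[of y] False by simp
      qed
    qed
    also have "\<dots> = (\<Sum>y\<in>H - N B0. t + 1)"
      using fH by (simp add: sum.If_cases Diff_eq)
    also have "\<dots> = (t + 1) * card (H - N B0)" by simp
    finally have DC: "(\<Sum>C\<in>F - {B0}. c C) \<le> (t + 1) * card (H - N B0)" unfolding c_def .
    have "card (H - N B0) = card H - c B0" unfolding c_def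
      using fH card_Diff_subset_Int[of H "N B0"] by (simp add: Int_commute)
    moreover have "c B0 \<le> card H" unfolding c_def using fH by (intro card_mono) auto
    ultimately have cd: "int (card (H - N B0)) = int t + int (c B0)" using Hc by simp
    have "int (\<Sum>C\<in>F - {B0}. c C) = (\<Sum>C\<in>F - {B0}. int (c B0) + 1)"
      using cC by (simp add: of_nat_sum)
    also have "\<dots> = (int m - 1) * (int (c B0) + 1)" using cardF0 m3 by (simp add: of_nat_diff)
    finally have L: "int (\<Sum>C\<in>F - {B0}. c C) = (int m - 1) * (int (c B0) + 1)" .
    have "int (\<Sum>C\<in>F - {B0}. c C) \<le> (int t + 1) * (int t + int (c B0))"
    proof -
      have "int (\<Sum>C\<in>F - {B0}. c C) \<le> int ((t + 1) * card (H - N B0))" using DC by (simp only: of_nat_le_iff)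
      also have "\<dots> = (int t + 1) * int (card (H - N B0))" by (simp add: algebra_simps)
      finally show ?thesis unfolding cd .
    qed
    then have "(int t ^ 2 + int t + 1) * (int (c B0) + 1) \<le> (int t + 1) * (int t + int (c B0))"
      using L meq by (simp add: add.commute add.left_commute)
    then have "1 + int (c B0) * int t ^ 2 \<le> 0" by (simp add: algebra_simps power2_eq_square)
    moreover have "0 \<le> int (c B0) * int t ^ 2" by simp
    ultimately have False by linarith
    then show ?thesis ..
  next
    case zero
    define Z where "Z = {C\<in>F. e C = 0}"
    show ?thesis
    proof (cases "F - Z = {}")
      case True
      then have "\<forall>C\<in>F. e C = 0" unfolding Z_def by blast
      then show ?thesis by (rule allzero)
    next
      case False
      have fFZ: "finite (F - Z)" using finF by simp
      obtain B1 where B1: "B1 \<in> F - Z" and B1min: "\<And>C. C \<in> F - Z \<Longrightarrow> e B1 \<le> e C"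
        using obtain_min_int[OF fFZ False, of e] by blast
      have B1F: "B1 \<in> F" and e1nz: "e B1 \<noteq> 0" using B1 unfolding Z_def by auto
      have e1nn: "0 \<le> e B1" using B0min[OF B1F] zero by simp
      have B0Z: "B0 \<in> Z" using B0 zero unfolding Z_def by simp
      have B10: "B1 \<noteq> B0" using e1nz zero by auto
      have "2 * int (card (N B1 \<inter> N B0)) = e B1" using pair[OF B1F B0 B10] zero by simp
      moreover have "card (N B1 \<inter> N B0) \<noteq> 0" using calculation e1nz by auto
      then have "1 \<le> int (card (N B1 \<inter> N B0))" by simp
      ultimately have e2: "2 \<le> e B1" by linarith
      define r where "r = card Z"
      have fZ: "finite Z" unfolding Z_def using finF by simp
      have ZF: "Z \<subseteq> F" unfolding Z_def by auto
      have pL: "2 * int (card (N B1 \<inter> N L)) = e B1" if "L \<in> Z" for L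
      proof -
        have "L \<in> F" "e L = 0" using that unfolding Z_def by auto
        moreover then have "B1 \<noteq> L" using e1nz by auto
        ultimately show ?thesis using pair[of B1 L] B1F by simp
      qed
      have "(\<Sum>L\<in>Z. card (N B1 \<inter> N L)) = card (\<Union>L\<in>Z. N B1 \<inter> N L)"
      proof (rule card_UN_disjoint[symmetric])
        show "finite Z" by (rule fZ)
        show "\<forall>i\<in>Z. finite (N B1 \<inter> N i)" using fN[OF B1F] by simp
        show "\<forall>i\<in>Z. \<forall>j\<in>Z. i \<noteq> j \<longrightarrow> N B1 \<inter> N i \<inter> (N B1 \<inter> N j) = {}"
        proof (intro ballI impI)
          fix i j assume "i \<in> Z" "j \<in> Z" "i \<noteq> j"
          then have "N i \<inter> N j = {}" using disj0[of i j] unfolding Z_def by auto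
          then show "N B1 \<inter> N i \<inter> (N B1 \<inter> N j) = {}" by blast
        qed
      qed
      also have "\<dots> \<le> card (N B1)" using fN[OF B1F] by (intro card_mono) auto
      finally have SL: "(\<Sum>L\<in>Z. card (N B1 \<inter> N L)) \<le> card (N B1)" .
      have "int r * e B1 = (\<Sum>L\<in>Z. 2 * int (card (N B1 \<inter> N L)))"
        using pL unfolding r_def by simp
      also have "\<dots> = 2 * int (\<Sum>L\<in>Z. card (N B1 \<inter> N L))" by (simp add: sum_distrib_left)
      also have "\<dots> \<le> 2 * int (card (N B1))" using SL by (simp only: of_nat_le_iff mult_le_cancel_left) simp
      finally have R: "int r * e B1 \<le> 2 * int t + 2 * e B1" unfolding e_def by simp
      have EZ: "E = (\<Sum>C\<in>Z. e C) + (\<Sum>C\<in>F - Z. e C)"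
        unfolding E_def using sum.subset_diff[OF ZF finF, of e] by simp
      have "(\<Sum>C\<in>Z. e C) = 0" unfolding Z_def by simp
      moreover have "(\<Sum>C\<in>F - Z. e B1) \<le> (\<Sum>C\<in>F - Z. e C)" by (rule sum_mono) (rule B1min)
      moreover have "card (F - Z) = m - r" unfolding m_def r_def using finF ZF by (simp add: card_Diff_subset fZ)
      moreover have "r \<le> m" unfolding m_def r_def using finF ZF by (simp add: card_mono)
      ultimately have EL: "(int m - int r) * e B1 \<le> E" using EZ by (simp add: of_nat_diff)
      have st: "(int m - 2 - 2 * int t) * e B1 + E \<le> 2 * int t ^ 2" using star[OF B1F] .
      have X: "(int m - 2 - 2 * int t) * e B1 + (int m - int r) * e B1 + 2 * e B1 - int r * e B1
          = (2 * int m - 2 * int t - 4) * e B1 + 2 * (2 * e B1 - int r * e B1) + 2 * int t * 0"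
        by (simp add: algebra_simps)
      have K: "(2 * int m - 4 - 2 * int t) * e B1 \<le> 2 * int t ^ 2 + 2 * int t"
      proof -
        have "(int m - 2 - 2 * int t) * e B1 + (int m - int r) * e B1 \<le> 2 * int t ^ 2" using st EL by linarith
        moreover have "(int m - 2 - 2 * int t) * e B1 + (int m - int r) * e B1
             = (2 * int m - 4 - 2 * int t) * e B1 + 2 * e B1 - int r * e B1"
          by (simp add: algebra_simps)
        ultimately show ?thesis using R by linarith
      qed
      have "(2 * int m - 4 - 2 * int t) * 2 \<le> (2 * int m - 4 - 2 * int t) * e B1"
        using mt e2 by (intro mult_left_mono) auto
      moreover have "(2 * int m - 4 - 2 * int t) * 2 = 4 * int m - 8 - 4 * int t" by simp
      ultimately have False using K h2i by linarith
      then show ?thesis ..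
    qed
  qed
qed

end


lemma sq_aux: "2 * (x::nat) \<le> x * x + 1"
proof (cases x)
  case (Suc n)
  then show ?thesis by (simp add: algebra_simps)
qed simp

theorem lemma7:
  fixes \<mu> :: nat and F :: "'a set set"
  assumes "finite F" and "uniform_family (2 * \<mu> + 1) F"
  shows "(weak_delta_system (\<mu> + 1) F \<and> card F \<ge> \<mu>^2 + \<mu> + 3 \<longrightarrow> strong_delta_system F)
       \<and> (weak_delta_system \<mu> F \<and> card F \<ge> (\<mu> + 1)^2 + \<mu> + 3 \<longrightarrow> strong_delta_system F)"
proof (intro conjI impI)
  have unif: "\<And>S. S \<in> F \<Longrightarrow> finite S \<and> card S = 2 * \<mu> + 1"
    using assms(2) unfolding uniform_family_def by blast
  have sq: "2 * \<mu> \<le> \<mu> * \<mu> + 1" by (rule sq_aux)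
  {
    assume A: "weak_delta_system (\<mu> + 1) F \<and> card F \<ge> \<mu>^2 + \<mu> + 3"
    have wd: "\<And>S T. S \<in> F \<Longrightarrow> T \<in> F \<Longrightarrow> S \<noteq> T \<Longrightarrow> card (S \<inter> T) = \<mu> + 1"
      using A unfolding weak_delta_system_def by blast
    have m: "\<mu>^2 + \<mu> + 3 \<le> card F" using A by blast
    show "strong_delta_system F"
    proof (cases "\<mu> = 0")
      case True
      have "card F \<ge> 3" using m True by simp
      then have "F \<noteq> {}" by auto
      then obtain S where S: "S \<in> F" by blast
      have "card (F - {S}) = card F - 1" using assms(1) S by (simp add: card_Diff_singleton)
      then have "card (F - {S}) \<noteq> 0" using \<open>card F \<ge> 3\<close> by simp
      then have "F - {S} \<noteq> {}" by (metis card.empty)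
      then obtain T where "T \<in> F - {S}" by blast
      then have ST: "S \<in> F" "T \<in> F" "S \<noteq> T" using S by auto
      have fS: "finite S" "card S = 1" "finite T" "card T = 1" using unif ST True by auto
      have cI: "card (S \<inter> T) = 1" using wd[OF ST] True by simp
      have "S \<inter> T = S" using fS cI by (intro card_subset_eq) auto
      moreover have "S \<inter> T = T" using fS cI by (intro card_subset_eq) auto
      ultimately have False using ST(3) by simp
      then show ?thesis ..
    next
      case False
      then have mu1: "1 \<le> \<mu>" by simp
      have kl: "2 * \<mu> + 1 - (\<mu> + 1) = \<mu>" by simp
      show ?thesis
      proof (rule core[of F "2 * \<mu> + 1" "\<mu> + 1"], unfold kl)
        show "finite F" by (rule assms(1))
        show "\<And>S. S \<in> F \<Longrightarrow> finite S \<and> card S = 2 * \<mu> + 1" by (rule unif)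
        show "\<And>S T. S \<in> F \<Longrightarrow> T \<in> F \<Longrightarrow> S \<noteq> T \<Longrightarrow> card (S \<inter> T) = \<mu> + 1" by (rule wd)
        show "\<mu> + 1 \<le> 2 * \<mu> + 1" by simp
        show "(\<mu> + 2)^2 \<le> 2 * card F" using m sq by (simp add: power2_eq_square algebra_simps)
        show "\<mu>^2 + 3 * \<mu> + 4 < 2 * card F" using m sq mu1 by (simp add: power2_eq_square algebra_simps)
        show "\<mu>^2 + \<mu> + 2 \<le> card F" using m by simp
        have "\<mu> \<le> \<mu> * \<mu>" using mu1 by simp
        moreover have "\<mu> * \<mu> + \<mu> + 3 \<le> card F" using m by (simp add: power2_eq_square)
        ultimately show "\<mu> + 1 + 2 < card F" using mu1 by linarith
        show "\<mu>^2 + \<mu> + 3 \<le> card F \<or> 2 * \<mu> + 1 + 1 = 2 * \<mu>" using m by simp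
      qed
    qed
  }
  {
    assume A: "weak_delta_system \<mu> F \<and> card F \<ge> (\<mu> + 1)^2 + \<mu> + 3"
    have wd: "\<And>S T. S \<in> F \<Longrightarrow> T \<in> F \<Longrightarrow> S \<noteq> T \<Longrightarrow> card (S \<inter> T) = \<mu>"
      using A unfolding weak_delta_system_def by blast
    have m: "(\<mu> + 1)^2 + \<mu> + 3 \<le> card F" using A by blast
    show "strong_delta_system F"
    proof (cases "\<mu> = 0")
      case True
      have "\<forall>S\<in>F. \<forall>T\<in>F. S \<noteq> T \<longrightarrow> S \<inter> T = {}"
      proof (intro ballI impI)
        fix S T assume ST: "S \<in> F" "T \<in> F" "S \<noteq> T"
        then have "card (S \<inter> T) = 0" using wd True by simp
        moreover have "finite (S \<inter> T)" using unif ST by auto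
        ultimately show "S \<inter> T = {}" by simp
      qed
      then show ?thesis unfolding strong_delta_system_def by blast
    next
      case False
      then have mu1: "1 \<le> \<mu>" by simp
      have kl: "2 * \<mu> + 1 - \<mu> = \<mu> + 1" by simp
      have mm: "\<mu> \<le> \<mu> * \<mu>" using mu1 by simp
      show ?thesis
      proof (rule core[of F "2 * \<mu> + 1" "\<mu>"], unfold kl)
        show "finite F" by (rule assms(1))
        show "\<And>S. S \<in> F \<Longrightarrow> finite S \<and> card S = 2 * \<mu> + 1" by (rule unif)
        show "\<And>S T. S \<in> F \<Longrightarrow> T \<in> F \<Longrightarrow> S \<noteq> T \<Longrightarrow> card (S \<inter> T) = \<mu>" by (rule wd)
        show "\<mu> \<le> 2 * \<mu> + 1" by simp
        have m': "\<mu> * \<mu> + 3 * \<mu> + 4 \<le> card F" using m by (simp add: power2_eq_square algebra_simps)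
        have "(\<mu> + 1 + 2)^2 = \<mu> * \<mu> + 6 * \<mu> + 9" by (simp add: power2_eq_square algebra_simps)
        then show "(\<mu> + 1 + 2)^2 \<le> 2 * card F" using m' mm mu1 by linarith
        have "(\<mu> + 1)^2 + 3 * (\<mu> + 1) + 4 = \<mu> * \<mu> + 5 * \<mu> + 8" by (simp add: power2_eq_square algebra_simps)
        then show "(\<mu> + 1)^2 + 3 * (\<mu> + 1) + 4 < 2 * card F" using m' mm mu1 by linarith
        show "(\<mu> + 1)^2 + (\<mu> + 1) + 2 \<le> card F" using m by (simp add: power2_eq_square algebra_simps)
        show "\<mu> + 2 < card F" using m by (simp add: power2_eq_square algebra_simps)
        show "(\<mu> + 1)^2 + (\<mu> + 1) + 3 \<le> card F \<or> 2 * \<mu> + 1 + 1 = 2 * (\<mu> + 1)" by simp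
      qed
    qed
  }
qed

end
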